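(* Let $V$ be a vertex algebra and $W_1,W_2$ $V$-modules with $g(V)_{\ge0}W_1=W_1$. Then every $g(V)_{\ge0}$-homomorphism $f:W_1\to W_2$ (a linear map with $f(v_nw)=v_nf(w)$ for all $v\in V$, $n\ge0$, $w\in W_1$) is a $V$-homomorphism, i.e. $f(v_nw)=v_nf(w)$ for all $n\in\mathbb Z$.
   Context: $(V,Y,\mathbf 1)$ is a vertex algebra; $V$-modules are modules for the vertex algebra (no grading assumed), with $Y_W(v,x)=\sum_nv_nx^{-n-1}$. $g(V)_{\ge0}W_1=\mathrm{span}\{v_nw\mid v\in V,\ n\ge0,\ w\in W_1\}$. *)

theory Defs
  imports Complex_Main "HOL-Library.Groups_Big_Fun"
begin

text \<open>Vertex operators are encoded by their modes: Y u n w stands for u_n w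
  (coefficient of x^(-n-1) in Y(u,x)w).\<close>

definition int_sign :: "int \<Rightarrow> 'k::field" where
  "int_sign r = (if even r then 1 else -1)"

text \<open>All sums are finite by truncation; Sum_any sums over the finite support.\<close>

definition borcherds ::
  "('k::field_char_0 \<Rightarrow> 'w::ab_group_add \<Rightarrow> 'w) \<Rightarrow> ('v \<Rightarrow> int \<Rightarrow> 'v \<Rightarrow> 'v)
   \<Rightarrow> ('v \<Rightarrow> int \<Rightarrow> 'w \<Rightarrow> 'w) \<Rightarrow> bool" where
  "borcherds sW Y YW \<longleftrightarrow>
     (\<forall>u v w p q r.
        (\<Sum>i. sW (of_int p gchoose i) (YW (Y u (r + int i) v) (p + q - int i) w))
      = (\<Sum>i. sW ((-1) ^ i * (of_int r gchoose i))
               (YW u (p + r - int i) (YW v (q + int i) w)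
                - sW (int_sign r) (YW v (q + r - int i) (YW u (p + int i) w)))))"

definition va_module ::
  "('k::field_char_0 \<Rightarrow> 'v::ab_group_add \<Rightarrow> 'v) \<Rightarrow> ('v \<Rightarrow> int \<Rightarrow> 'v \<Rightarrow> 'v) \<Rightarrow> 'v
   \<Rightarrow> ('k \<Rightarrow> 'w::ab_group_add \<Rightarrow> 'w) \<Rightarrow> ('v \<Rightarrow> int \<Rightarrow> 'w \<Rightarrow> 'w) \<Rightarrow> bool" where
  "va_module sV Y one sW YW \<longleftrightarrow>
     vector_space sW \<and>
     (\<forall>n w. Vector_Spaces.linear sV sW (\<lambda>u. YW u n w)) \<and>
     (\<forall>u n. Vector_Spaces.linear sW sW (YW u n)) \<and>
     (\<forall>u w. \<exists>N. \<forall>n\<ge>N. YW u n w = 0) \<and>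
     (\<forall>n w. YW one n w = (if n = -1 then w else 0)) \<and>
     borcherds sW Y YW"

definition vertex_algebra ::
  "('k::field_char_0 \<Rightarrow> 'v::ab_group_add \<Rightarrow> 'v) \<Rightarrow> ('v \<Rightarrow> int \<Rightarrow> 'v \<Rightarrow> 'v) \<Rightarrow> 'v \<Rightarrow> bool" where
  "vertex_algebra sV Y one \<longleftrightarrow>
     vector_space sV \<and>
     (\<forall>n w. Vector_Spaces.linear sV sV (\<lambda>u. Y u n w)) \<and>
     (\<forall>u n. Vector_Spaces.linear sV sV (Y u n)) \<and>
     (\<forall>u w. \<exists>N. \<forall>n\<ge>N. Y u n w = 0) \<and>
     (\<forall>n w. Y one n w = (if n = -1 then w else 0)) \<and>
     (\<forall>u n. n \<ge> 0 \<longrightarrow> Y u n one = 0) \<and>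
     (\<forall>u. Y u (-1) one = u) \<and>
     borcherds sV Y Y"

definition gV_nonneg_span ::
  "('k::field \<Rightarrow> 'w::ab_group_add \<Rightarrow> 'w) \<Rightarrow> ('v \<Rightarrow> int \<Rightarrow> 'w \<Rightarrow> 'w) \<Rightarrow> 'w set" where
  "gV_nonneg_span sW YW = module.span sW {YW v n w | v n w. n \<ge> 0}"

end

theory Submission
  imports Defs
begin

lemma sum_any_trunc:
  fixes g :: "nat \<Rightarrow> 'a::comm_monoid_add"
  assumes "\<And>i. i \<ge> M \<Longrightarrow> g i = 0"
  shows "Sum_any g = sum g {..<M}"
  by (rule Sum_any.expand_superset) (use assms not_le in auto)

lemma gchoose_nat_zero:
  assumes "p \<ge> 0" "i > nat p"
  shows "(of_int p gchoose i :: 'k::field_char_0) = 0"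
proof -
  obtain k where k: "p = int k" using assms(1) nonneg_int_cases by blast
  have "(of_int p :: 'k) gchoose i = of_nat (k choose i)"
    by (simp add: k binomial_gbinomial)
  then show ?thesis using assms k by simp
qed

lemma step:
  fixes s1 :: "'k::field_char_0 \<Rightarrow> 'w1::ab_group_add \<Rightarrow> 'w1" and Y1 :: "'v \<Rightarrow> int \<Rightarrow> 'w1 \<Rightarrow> 'w1"
    and s2 :: "'k \<Rightarrow> 'w2::ab_group_add \<Rightarrow> 'w2" and Y2 :: "'v \<Rightarrow> int \<Rightarrow> 'w2 \<Rightarrow> 'w2"
    and Y :: "'v \<Rightarrow> int \<Rightarrow> 'v \<Rightarrow> 'v"
    and f :: "'w1 \<Rightarrow> 'w2"
  assumes B1: "borcherds s1 Y Y1" and B2: "borcherds s2 Y Y2"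
    and vs1: "vector_space s1" and vs2: "vector_space s2"
    and lin1: "\<forall>u n. Vector_Spaces.linear s1 s1 (Y1 u n)"
    and lin2: "\<forall>u n. Vector_Spaces.linear s2 s2 (Y2 u n)"
    and tr1: "\<forall>u w. \<exists>N. \<forall>n\<ge>N. Y1 u n w = 0"
    and tr2: "\<forall>u w. \<exists>N. \<forall>n\<ge>N. Y2 u n w = 0"
    and lf: "Vector_Spaces.linear s1 s2 f"
    and hyp: "\<forall>v n w. n \<ge> 0 \<longrightarrow> f (Y1 v n w) = Y2 v n (f w)"
    and IH: "\<forall>m'>m. \<forall>v n. f (Y1 v n (Y1 u m' x)) = Y2 v n (f (Y1 u m' x))"
    and m0: "m \<ge> 0"
  shows "f (Y1 v n (Y1 u m x)) = Y2 v n (f (Y1 u m x))"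
proof -
  interpret V1: vector_space s1 by (rule vs1)
  interpret V2: vector_space s2 by (rule vs2)
  interpret F: module_hom s1 s2 f using lf by (simp add: linear_iff_module_hom)
  have Y1z: "Y1 a k 0 = 0" for a k
    using lin1 module_hom.zero linear_iff_module_hom by metis
  have Y2z: "Y2 a k 0 = 0" for a k
    using lin2 module_hom.zero linear_iff_module_hom by metis
  obtain N1 where N1: "\<forall>k\<ge>N1. Y1 v k x = 0" using tr1 by blast
  obtain N2 where N2: "\<forall>k\<ge>N2. Y2 v k (f x) = 0" using tr2 by blast
  obtain N3 where N3: "\<forall>k\<ge>N3. Y1 u k x = 0" using tr1 by blast
  define p where "p = max 0 (max N1 N2)"
  define r where "r = n - p"
  define M' where "M' = nat (N3 - m)"
  have p0: "p \<ge> 0" by (simp add: p_def)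
  have fY: "Y2 u (m + int i) (f x) = f (Y1 u (m + int i) x)" for i
    using hyp m0 by simp
  define c where "c i = ((-1) ^ i * (of_int r gchoose i) :: 'k)" for i
  define g1 where "g1 i = s1 (c i) (Y1 v (p + r - int i) (Y1 u (m + int i) x))" for i
  define g2 where "g2 i = s2 (c i) (Y2 v (p + r - int i) (Y2 u (m + int i) (f x)))" for i
  define h1 where "h1 i = s1 (of_int p gchoose i) (Y1 (Y v (r + int i) u) (p + m - int i) x)" for i
  define h2 where "h2 i = s2 (of_int p gchoose i) (Y2 (Y v (r + int i) u) (p + m - int i) (f x))" for i
  have e1: "(\<Sum>i. h1 i) = (\<Sum>i. g1 i)"
  proof -
    have "(\<Sum>i. s1 (of_int p gchoose i) (Y1 (Y v (r + int i) u) (p + m - int i) x))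
      = (\<Sum>i. s1 ((-1) ^ i * (of_int r gchoose i))
               (Y1 v (p + r - int i) (Y1 u (m + int i) x)
                - s1 (int_sign r) (Y1 u (m + r - int i) (Y1 v (p + int i) x))))"
      using B1 unfolding borcherds_def by blast
    moreover have "Y1 v (p + int i) x = 0" for i using N1 p_def by simp
    ultimately show ?thesis unfolding h1_def g1_def c_def by (simp add: Y1z)
  qed
  have e2: "(\<Sum>i. h2 i) = (\<Sum>i. g2 i)"
  proof -
    have "(\<Sum>i. s2 (of_int p gchoose i) (Y2 (Y v (r + int i) u) (p + m - int i) (f x)))
      = (\<Sum>i. s2 ((-1) ^ i * (of_int r gchoose i))
               (Y2 v (p + r - int i) (Y2 u (m + int i) (f x))
                - s2 (int_sign r) (Y2 u (m + r - int i) (Y2 v (p + int i) (f x)))))"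
      using B2 unfolding borcherds_def by blast
    moreover have "Y2 v (p + int i) (f x) = 0" for i using N2 p_def by simp
    ultimately show ?thesis unfolding h2_def g2_def c_def by (simp add: Y2z)
  qed
  have s1: "(\<Sum>i. h1 i) = sum h1 {..<Suc (nat p)}"
    by (rule sum_any_trunc) (simp add: h1_def gchoose_nat_zero p0)
  have s2: "(\<Sum>i. h2 i) = sum h2 {..<Suc (nat p)}"
    by (rule sum_any_trunc) (simp add: h2_def gchoose_nat_zero p0)
  have t1: "(\<Sum>i. g1 i) = sum g1 {..<Suc M'}"
    by (rule sum_any_trunc) (use N3 in \<open>simp add: g1_def M'_def Y1z\<close>)
  have t2: "(\<Sum>i. g2 i) = sum g2 {..<Suc M'}"
    by (rule sum_any_trunc) (use N3 in \<open>simp add: g2_def M'_def Y2z fY\<close>)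
  have fh: "f (h1 i) = h2 i" if "i < Suc (nat p)" for i
  proof -
    have "p + m - int i \<ge> 0" using that m0 p0 by simp
    then show ?thesis unfolding h1_def h2_def using hyp by (simp add: F.scale)
  qed
  have fg: "f (g1 (Suc i)) = g2 (Suc i)" for i
    unfolding g1_def g2_def using IH m0 fY[of "Suc i"] by (simp add: F.scale)
  have "f (sum h1 {..<Suc (nat p)}) = sum h2 {..<Suc (nat p)}"
    unfolding F.sum using fh by (intro sum.cong) auto
  then have "f (sum g1 {..<Suc M'}) = sum g2 {..<Suc M'}"
    using e1 e2 s1 s2 t1 t2 by simp
  then have "f (g1 0) + (\<Sum>i<M'. f (g1 (Suc i))) = g2 0 + (\<Sum>i<M'. g2 (Suc i))"
    by (simp only: sum.lessThan_Suc_shift F.add F.sum)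
  then have "f (g1 0) = g2 0" using fg by simp
  moreover have "c 0 = 1" by (simp add: c_def)
  ultimately show ?thesis unfolding g1_def g2_def r_def using fY[of 0] by simp
qed

theorem mainTheorem12:
  fixes sV :: "'k::field_char_0 \<Rightarrow> 'v::ab_group_add \<Rightarrow> 'v"
    and Y :: "'v \<Rightarrow> int \<Rightarrow> 'v \<Rightarrow> 'v" and one :: 'v
    and s1 :: "'k \<Rightarrow> 'w1::ab_group_add \<Rightarrow> 'w1" and Y1 :: "'v \<Rightarrow> int \<Rightarrow> 'w1 \<Rightarrow> 'w1"
    and s2 :: "'k \<Rightarrow> 'w2::ab_group_add \<Rightarrow> 'w2" and Y2 :: "'v \<Rightarrow> int \<Rightarrow> 'w2 \<Rightarrow> 'w2"
    and f :: "'w1 \<Rightarrow> 'w2"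
  assumes "vertex_algebra sV Y one"
    and "va_module sV Y one s1 Y1"
    and "va_module sV Y one s2 Y2"
    and "gV_nonneg_span s1 Y1 = UNIV"
    and "Vector_Spaces.linear s1 s2 f"
    and "\<forall>v n w. n \<ge> 0 \<longrightarrow> f (Y1 v n w) = Y2 v n (f w)"
  shows "\<forall>v n w. f (Y1 v n w) = Y2 v n (f w)"
proof -
  note M1 = assms(2)[unfolded va_module_def]
  note M2 = assms(3)[unfolded va_module_def]
  have vs1: "vector_space s1" and lin1: "\<forall>u n. Vector_Spaces.linear s1 s1 (Y1 u n)"
    and tr1: "\<forall>u w. \<exists>N. \<forall>n\<ge>N. Y1 u n w = 0" and B1: "borcherds s1 Y Y1"
    using M1 by auto
  have vs2: "vector_space s2" and lin2: "\<forall>u n. Vector_Spaces.linear s2 s2 (Y2 u n)"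
    and tr2: "\<forall>u w. \<exists>N. \<forall>n\<ge>N. Y2 u n w = 0" and B2: "borcherds s2 Y Y2"
    using M2 by auto
  note lf = assms(5) and hyp = assms(6)
  interpret V1: vector_space s1 by (rule vs1)
  interpret F: module_hom s1 s2 f using lf by (simp add: linear_iff_module_hom)
  have Y1h: "module_hom s1 s1 (Y1 a k)" for a k
    using lin1 linear_iff_module_hom by metis
  have Y2h: "module_hom s2 s2 (Y2 a k)" for a k
    using lin2 linear_iff_module_hom by metis
  define P where "P y \<longleftrightarrow> (\<forall>v n. f (Y1 v n y) = Y2 v n (f y))" for y
  have gen: "P (Y1 u m x)" if m0: "m \<ge> 0" for u m x
  proof -
    obtain N3 where N3: "\<forall>k\<ge>N3. Y1 u k x = 0" using tr1 by blast
    have "\<forall>m. m \<ge> N3 - int d \<longrightarrow> m \<ge> 0 \<longrightarrow> P (Y1 u m x)" for d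
    proof (induction d)
      case 0
      then show ?case using N3 by (simp add: P_def module_hom.zero[OF Y1h] module_hom.zero[OF Y2h])
    next
      case (Suc d)
      show ?case
      proof (intro allI impI)
        fix m :: int assume a: "m \<ge> N3 - int (Suc d)" "m \<ge> 0"
        have IH: "\<forall>m'>m. \<forall>v n. f (Y1 v n (Y1 u m' x)) = Y2 v n (f (Y1 u m' x))"
          using Suc.IH a unfolding P_def by auto
        show "P (Y1 u m x)" unfolding P_def
          using step[OF B1 B2 vs1 vs2 lin1 lin2 tr1 tr2 lf hyp IH a(2)] by blast
      qed
    qed
    from this[of "nat (N3 - m)"] show ?thesis using m0 by simp
  qed
  have sub: "V1.subspace (Collect P)"
  proof (rule V1.subspaceI)
    show "0 \<in> Collect P" by (simp add: P_def module_hom.zero[OF Y1h] module_hom.zero[OF Y2h])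
  next
    fix a b assume "a \<in> Collect P" "b \<in> Collect P"
    then show "a + b \<in> Collect P"
      by (simp add: P_def module_hom.add[OF Y1h] module_hom.add[OF Y2h] F.add)
  next
    fix c a assume "a \<in> Collect P"
    then show "s1 c a \<in> Collect P"
      by (simp add: P_def module_hom.scale[OF Y1h] module_hom.scale[OF Y2h] F.scale)
  qed
  have "P y" for y
  proof -
    have "y \<in> V1.span {Y1 v n w | v n w. n \<ge> 0}"
      using assms(4) unfolding gV_nonneg_span_def by simp
    then show ?thesis
      by (rule V1.span_induct[OF _ sub]) (use gen in auto)
  qed
  then show ?thesis unfolding P_def by blast
qed

end
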